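(* Let $X$ and $Y$ be random variables taking values in the finite sets $\mathcal{X}=\{1,\dots,M\}$ and $\mathcal{Y}=\{1,\dots,N\}$, with joint distribution $P_{XY}$. For $\varepsilon\in[\mathsf{P}_{\mathsf{c}}(X),\mathsf{P}_{\mathsf{c}}(X|Y)]$ define $$\mathcal{h}(\varepsilon)=\sup\left\{\mathsf{P}_{\mathsf{c}}(Y|Z)\;:\;P_{Z|Y},\ X - Y - Z,\ \mathsf{P}_{\mathsf{c}}(X|Z)\le\varepsilon\right\},$$ where the supremum is over all channels $P_{Z|Y}$ into a finite alphabet $\mathcal{Z}$ such that $X,Y,Z$ form a Markov chain $X - Y - Z$. Then $\mathcal{h}$ is piecewise linear on $[\mathsf{P}_{\mathsf{c}}(X),\mathsf{P}_{\mathsf{c}}(X|Y)]$: there exist an integer $K\ge 1$ and thresholds $\mathsf{P}_{\mathsf{c}}(X)=\varepsilon_0\le\varepsilon_1\le\dots\le\varepsilon_K=\mathsf{P}_{\mathsf{c}}(X|Y)$ such that $\mathcal{h}$ is linear (affine) on $[\varepsilon_{i-1},\varepsilon_i]$ for each $i=1,\dots,K$.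
   Context: For a discrete random variable $X$, $\mathsf{P}_{\mathsf{c}}(X)=\max_x P_X(x)$ is the probability of correctly guessing $X$. For jointly distributed discrete $X,Z$, $\mathsf{P}_{\mathsf{c}}(X|Z)=\sum_{z}\max_{x}P_{XZ}(x,z)=\sum_z P_Z(z)\max_x P_{X|Z}(x|z)$ is the probability of correctly guessing $X$ from $Z$. $X - Y - Z$ means $X$ and $Z$ are conditionally independent given $Y$ (the channel $P_{Z|Y}$ acts on $Y$ only). *)

theory Defs
  imports Complex_Main
begin

text \<open>Alphabets: X in {1..M}, Y in {1..N}, Z in {1..L}.
  The joint pmf of (X,Y) is P x y; a channel P_{Z|Y} is W y z.
  Under the Markov chain X - Y - Z, P_{XYZ}(x,y,z) = P x y * W y z.\<close>

definition joint_pmf :: "nat \<Rightarrow> nat \<Rightarrow> (nat \<Rightarrow> nat \<Rightarrow> real) \<Rightarrow> bool" where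
  "joint_pmf M N P \<longleftrightarrow> (\<forall>x\<in>{1..M}. \<forall>y\<in>{1..N}. P x y \<ge> 0)
     \<and> (\<Sum>x=1..M. \<Sum>y=1..N. P x y) = 1"

definition channel :: "nat \<Rightarrow> nat \<Rightarrow> (nat \<Rightarrow> nat \<Rightarrow> real) \<Rightarrow> bool" where
  "channel N L W \<longleftrightarrow> (\<forall>y\<in>{1..N}. (\<forall>z\<in>{1..L}. W y z \<ge> 0) \<and> (\<Sum>z=1..L. W y z) = 1)"

definition Pc_X :: "nat \<Rightarrow> nat \<Rightarrow> (nat \<Rightarrow> nat \<Rightarrow> real) \<Rightarrow> real" where
  "Pc_X M N P = Max ((\<lambda>x. \<Sum>y=1..N. P x y) ` {1..M})"

definition Pc_X_given_Y :: "nat \<Rightarrow> nat \<Rightarrow> (nat \<Rightarrow> nat \<Rightarrow> real) \<Rightarrow> real" where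
  "Pc_X_given_Y M N P = (\<Sum>y=1..N. Max ((\<lambda>x. P x y) ` {1..M}))"

definition Pc_X_given_Z ::
  "nat \<Rightarrow> nat \<Rightarrow> (nat \<Rightarrow> nat \<Rightarrow> real) \<Rightarrow> nat \<Rightarrow> (nat \<Rightarrow> nat \<Rightarrow> real) \<Rightarrow> real" where
  "Pc_X_given_Z M N P L W = (\<Sum>z=1..L. Max ((\<lambda>x. \<Sum>y=1..N. P x y * W y z) ` {1..M}))"

definition Pc_Y_given_Z ::
  "nat \<Rightarrow> nat \<Rightarrow> (nat \<Rightarrow> nat \<Rightarrow> real) \<Rightarrow> nat \<Rightarrow> (nat \<Rightarrow> nat \<Rightarrow> real) \<Rightarrow> real" where
  "Pc_Y_given_Z M N P L W = (\<Sum>z=1..L. Max ((\<lambda>y. \<Sum>x=1..M. P x y * W y z) ` {1..N}))"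

definition hfun :: "nat \<Rightarrow> nat \<Rightarrow> (nat \<Rightarrow> nat \<Rightarrow> real) \<Rightarrow> real \<Rightarrow> real" where
  "hfun M N P \<epsilon> = Sup {Pc_Y_given_Z M N P L W | L W.
      channel N L W \<and> Pc_X_given_Z M N P L W \<le> \<epsilon>}"

end

theory Submission
  imports Defs
begin


definition sat :: "'v set \<Rightarrow> (('v \<Rightarrow> real) \<times> real) set \<Rightarrow> ('v \<Rightarrow> real) \<Rightarrow> bool" where
  "sat V C u \<longleftrightarrow> (\<forall>(c,d)\<in>C. (\<Sum>i\<in>V. c i * u i) \<le> d)"

lemma between:
  fixes A B :: "real set"
  assumes "finite A" "finite B" "\<forall>a\<in>A. \<forall>b\<in>B. a \<le> b"
  shows "\<exists>x. (\<forall>a\<in>A. a \<le> x) \<and> (\<forall>b\<in>B. x \<le> b)"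
proof (cases "A = {}")
  case True
  then show ?thesis
  proof (cases "B = {}")
    case False
    then show ?thesis using True assms by (intro exI[of _ "Min B"]) auto
  qed auto
next
  case False
  then show ?thesis using assms by (intro exI[of _ "Max A"]) auto
qed

lemma fm1:
  fixes V :: "'a set" and C :: "(('a \<Rightarrow> real) \<times> real) set"
  assumes "finite V" "x \<in> V" "finite C"
  shows "\<exists>C'. finite C' \<and> (\<forall>u. sat (V - {x}) C' u \<longleftrightarrow> (\<exists>r. sat V C (u(x:=r))))"
proof -
  define s where "s c u = (\<Sum>i\<in>V-{x}. c i * u i)" for c :: "'a \<Rightarrow> real" and u
  have split: "(\<Sum>i\<in>V. c i * (u(x:=r)) i) = c x * r + s c u" for c u r
  proof -
    have "(\<Sum>i\<in>V. c i * (u(x:=r)) i) = c x * (u(x:=r)) x + (\<Sum>i\<in>V-{x}. c i * (u(x:=r)) i)"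
      using assms by (simp add: sum.remove)
    also have "(\<Sum>i\<in>V-{x}. c i * (u(x:=r)) i) = s c u" unfolding s_def
      by (rule sum.cong) auto
    finally show ?thesis by simp
  qed
  have slin: "s (\<lambda>i. a * cp i + b * cq i) u = a * s cp u + b * s cq u" for a b cp cq u
    unfolding s_def by (simp add: sum.distrib sum_distrib_left algebra_simps)
  define Z where "Z = {cd\<in>C. fst cd x = 0}"
  define Pp where "Pp = {cd\<in>C. fst cd x > 0}"
  define Nn where "Nn = {cd\<in>C. fst cd x < 0}"
  define comb :: "((('a \<Rightarrow> real) \<times> real) \<times> (('a \<Rightarrow> real) \<times> real)) \<Rightarrow> ('a \<Rightarrow> real) \<times> real" where "comb = (\<lambda>((cp,dp),(cq,dq)). ((\<lambda>i. (- cq x) * cp i + cp x * cq i), (- cq x) * dp + cp x * dq))"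
  define C' where "C' = Z \<union> comb ` (Pp \<times> Nn)"
  have fin: "finite C'" unfolding C'_def Z_def Pp_def Nn_def using assms by auto
  have "sat (V - {x}) C' u \<longleftrightarrow> (\<exists>r. sat V C (u(x:=r)))" for u
  proof
    assume "\<exists>r. sat V C (u(x:=r))"
    then obtain r where r: "sat V C (u(x:=r))" by blast
    have rc: "c x * r + s c u \<le> d" if "(c,d) \<in> C" for c d
      using r that split unfolding sat_def by fastforce
    show "sat (V - {x}) C' u" unfolding sat_def
    proof (intro ballI, clarify)
      fix c d assume cd: "(c,d) \<in> C'"
      show "(\<Sum>i\<in>V-{x}. c i * u i) \<le> d"
      proof (cases "(c,d) \<in> Z")
        case True
        then show ?thesis using rc[of c d] unfolding Z_def s_def by auto
      next
        case False
        then obtain cp dp cq dq where p: "(cp,dp)\<in>C" "cp x > 0" and q: "(cq,dq)\<in>C" "cq x < 0"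
          and eq: "(c,d) = comb ((cp,dp),(cq,dq))"
          using cd unfolding C'_def Pp_def Nn_def by auto
        have e1: "c = (\<lambda>i. (- cq x) * cp i + cp x * cq i)" "d = (- cq x) * dp + cp x * dq"
          using eq unfolding comb_def by auto
        have h1: "(- cq x) * (cp x * r + s cp u) \<le> (- cq x) * dp"
          using rc[OF p(1)] q(2) by (intro mult_left_mono) auto
        have h2: "cp x * (cq x * r + s cq u) \<le> cp x * dq"
          using rc[OF q(1)] p(2) by (intro mult_left_mono) auto
        have "s c u = (- cq x) * s cp u + cp x * s cq u" unfolding e1 by (rule slin)
        then show ?thesis using h1 h2 unfolding e1(2) s_def[symmetric] by (simp add: algebra_simps)
      qed
    qed
  next
    assume sC: "sat (V - {x}) C' u"
    have sC': "s c u \<le> d" if "(c,d) \<in> C'" for c d using sC that unfolding sat_def s_def by auto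
    define Lo where "Lo = (\<lambda>(c,d). (d - s c u) / c x) ` Nn"
    define Up where "Up = (\<lambda>(c,d). (d - s c u) / c x) ` Pp"
    have "\<forall>a\<in>Lo. \<forall>b\<in>Up. a \<le> b"
    proof (intro ballI)
      fix a b assume "a \<in> Lo" "b \<in> Up"
      then obtain cp dp cq dq where p: "(cp,dp)\<in>C" "cp x > 0" and q: "(cq,dq)\<in>C" "cq x < 0"
        and ab: "a = (dq - s cq u) / cq x" "b = (dp - s cp u) / cp x"
        unfolding Lo_def Up_def Pp_def Nn_def by auto
      have "comb ((cp,dp),(cq,dq)) \<in> C'" unfolding C'_def Pp_def Nn_def using p q by auto
      hence "s (\<lambda>i. (- cq x) * cp i + cp x * cq i) u \<le> (- cq x) * dp + cp x * dq"
        using sC' unfolding comb_def by auto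
      moreover have "s (\<lambda>i. (- cq x) * cp i + cp x * cq i) u = (- cq x) * s cp u + cp x * s cq u" by (rule slin)
      ultimately have h: "(- cq x) * s cp u + cp x * s cq u \<le> (- cq x) * dp + cp x * dq" by simp
      have "cp x * (dq - s cq u) \<ge> (- cq x) * (s cp u - dp)" using h by (simp add: algebra_simps)
      show "a \<le> b" unfolding ab using p(2) q(2) h
        by (simp add: divide_simps) (simp add: algebra_simps)
    qed
    moreover have "finite Lo" "finite Up" unfolding Lo_def Up_def Nn_def Pp_def using assms by auto
    ultimately obtain r where r: "\<forall>a\<in>Lo. a \<le> r" "\<forall>b\<in>Up. r \<le> b" using between by metis
    have "sat V C (u(x:=r))" unfolding sat_def
    proof (intro ballI, clarify)
      fix c d assume cd: "(c,d) \<in> C"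
      have "c x * r + s c u \<le> d"
      proof (cases "c x = 0")
        case True
        then have "(c,d) \<in> C'" using cd unfolding C'_def Z_def by auto
        then show ?thesis using sC' True by auto
      next
        case False
        show ?thesis
        proof (cases "c x > 0")
          case True
          then have "r \<le> (d - s c u) / c x" using r(2) cd unfolding Up_def Pp_def by force
          then show ?thesis using True by (simp add: pos_le_divide_eq algebra_simps)
        next
          case F2: False
          then have neg: "c x < 0" using False by auto
          then have "(d - s c u) / c x \<le> r" using r(1) cd unfolding Lo_def Nn_def by force
          then show ?thesis using neg by (simp add: neg_divide_le_eq algebra_simps)
        qed
      qed
      then show "(\<Sum>i\<in>V. c i * (u(x:=r)) i) \<le> d" using split by simp
    qed
    then show "\<exists>r. sat V C (u(x:=r))" by blast
  qed
  then show ?thesis using fin by blast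
qed


lemma sat_cong:
  assumes "\<And>i. i \<in> V \<Longrightarrow> u i = u' i"
  shows "sat V C u = sat V C u'"
proof -
  have "(\<Sum>i\<in>V. c i * u i) = (\<Sum>i\<in>V. c i * u' i)" for c
    by (rule sum.cong) (auto simp: assms)
  then show ?thesis unfolding sat_def by simp
qed

lemma fm:
  fixes V :: "'a set" and C :: "(('a \<Rightarrow> real) \<times> real) set"
  assumes "finite V" "finite C" "E \<subseteq> V"
  shows "\<exists>C'. finite C' \<and> (\<forall>u. sat (V - E) C' u \<longleftrightarrow> (\<exists>u'. (\<forall>i\<in>V-E. u' i = u i) \<and> sat V C u'))"
proof -
  have "finite E" using assms finite_subset by blast
  from this assms(3) show ?thesis
  proof (induction E rule: finite_induct)
    case empty
    show ?case
    proof (intro exI[of _ C] conjI allI iffI)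
      fix u assume "sat (V - {}) C u" then show "\<exists>u'. (\<forall>i\<in>V-{}. u' i = u i) \<and> sat V C u'" by auto
    next
      fix u assume "\<exists>u'. (\<forall>i\<in>V-{}. u' i = u i) \<and> sat V C u'"
      then obtain u' where "\<forall>i\<in>V. u' i = u i" "sat V C u'" by force
      then show "sat (V - {}) C u" using sat_cong[of V u' u C] by simp
    qed (rule assms(2))
  next
    case (insert x E)
    have "E \<subseteq> V" using insert.prems by blast
    then obtain C1 where C1: "finite C1" "\<forall>u. sat (V - E) C1 u \<longleftrightarrow> (\<exists>u'. (\<forall>i\<in>V-E. u' i = u i) \<and> sat V C u')"
      using insert.IH by blast
    have xin: "x \<in> V - E" using insert.prems insert.hyps by blast
    obtain C2 where C2: "finite C2" "\<forall>u. sat (V - E - {x}) C2 u \<longleftrightarrow> (\<exists>r. sat (V - E) C1 (u(x:=r)))"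
      using fm1[OF finite_Diff[OF assms(1)] xin C1(1)] by blast
    have eq: "V - insert x E = V - E - {x}" by auto
    show ?case
    proof (intro exI[of _ C2] conjI allI)
      fix u
      show "sat (V - insert x E) C2 u \<longleftrightarrow> (\<exists>u'. (\<forall>i\<in>V - insert x E. u' i = u i) \<and> sat V C u')"
      proof
        assume "sat (V - insert x E) C2 u"
        then have "sat (V - E - {x}) C2 u" unfolding eq .
        then obtain r where "sat (V - E) C1 (u(x:=r))" using C2(2)[rule_format, of u] by blast
        then obtain u' where "\<forall>i\<in>V-E. u' i = (u(x:=r)) i" "sat V C u'" using C1(2)[rule_format, of "u(x:=r)"] by blast
        then show "\<exists>u'. (\<forall>i\<in>V - insert x E. u' i = u i) \<and> sat V C u'" by (intro exI[of _ u']) auto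
      next
        assume "\<exists>u'. (\<forall>i\<in>V - insert x E. u' i = u i) \<and> sat V C u'"
        then obtain u' where u': "\<forall>i\<in>V - insert x E. u' i = u i" "sat V C u'" by auto
        have "\<forall>i\<in>V-E. u' i = (u(x:=u' x)) i" using u'(1) by auto
        then have "sat (V - E) C1 (u(x:=u' x))" using C1(2)[rule_format, of "u(x:=u' x)"] u'(2) by blast
        then have "sat (V - E - {x}) C2 u" using C2(2)[rule_format, of u] by blast
        then show "sat (V - insert x E) C2 u" unfolding eq .
      qed
    qed (rule C2(1))
  qed
qed


definition pwl :: "real \<Rightarrow> real \<Rightarrow> (real \<Rightarrow> real) \<Rightarrow> bool" where
  "pwl lo hi f \<longleftrightarrow> (\<exists>K::nat. K \<ge> 1 \<and> (\<exists>e :: nat \<Rightarrow> real.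
           e 0 = lo \<and> e K = hi
         \<and> (\<forall>i<K. e i \<le> e (Suc i))
         \<and> (\<forall>i\<in>{1..K}. \<exists>a b :: real. \<forall>x\<in>{e (i - 1)..e i}. f x = a * x + b)))"

lemma chain_mono:
  fixes e :: "nat \<Rightarrow> real"
  assumes "\<forall>i<K. e i \<le> e (Suc i)" "i \<le> j" "j \<le> K"
  shows "e i \<le> e j"
  using assms(2,3)
proof (induction j)
  case 0 then show ?case by simp
next
  case (Suc j)
  show ?case
  proof (cases "i = Suc j")
    case False
    then have "e i \<le> e j" using Suc by auto
    also have "\<dots> \<le> e (Suc j)" using assms(1) Suc by auto
    finally show ?thesis .
  qed simp
qed

lemma pwl_cong:
  assumes "pwl lo hi f" "\<And>x. lo \<le> x \<Longrightarrow> x \<le> hi \<Longrightarrow> f x = g x"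
  shows "pwl lo hi g"
proof -
  obtain K e where K: "K \<ge> 1" "e 0 = lo" "e K = hi" "\<forall>i<K. e i \<le> e (Suc i)"
    "\<forall>i\<in>{1..K}. \<exists>a b :: real. \<forall>x\<in>{e (i - 1)..e i}. f x = a * x + b"
    using assms(1) unfolding pwl_def by blast
  have "\<forall>i\<in>{1..K}. \<exists>a b :: real. \<forall>x\<in>{e (i - 1)..e i}. g x = a * x + b"
  proof
    fix i assume i: "i \<in> {1..K}"
    then obtain a b where ab: "\<forall>x\<in>{e (i - 1)..e i}. f x = a * x + b" using K by blast
    have "lo \<le> e (i - 1)" using chain_mono[OF K(4), of 0 "i - 1"] K(2) i by auto
    moreover have "e i \<le> hi" using chain_mono[OF K(4), of i K] K(3) i by auto
    ultimately have "\<forall>x\<in>{e (i - 1)..e i}. g x = a * x + b" using ab assms(2) by auto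
    then show "\<exists>a b :: real. \<forall>x\<in>{e (i - 1)..e i}. g x = a * x + b" by blast
  qed
  then show ?thesis unfolding pwl_def using K by blast
qed

lemma pwl_affine:
  assumes "lo \<le> hi"
  shows "pwl lo hi (\<lambda>x. a * x + b)"
  unfolding pwl_def
  apply (rule exI[of _ 1], simp)
  apply (rule exI[of _ "\<lambda>i. if i = 0 then lo else hi"])
  using assms by auto

lemma pwl_concat:
  assumes "pwl a b f" "pwl b c f"
  shows "pwl a c f"
proof -
  obtain K1 e1 where K1: "K1 \<ge> 1" "e1 0 = a" "e1 K1 = b" "\<forall>i<K1. e1 i \<le> e1 (Suc i)"
    "\<forall>i\<in>{1..K1}. \<exists>a b :: real. \<forall>x\<in>{e1 (i - 1)..e1 i}. f x = a * x + b"
    using assms(1) unfolding pwl_def by blast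
  obtain K2 e2 where K2: "K2 \<ge> 1" "e2 0 = b" "e2 K2 = c" "\<forall>i<K2. e2 i \<le> e2 (Suc i)"
    "\<forall>i\<in>{1..K2}. \<exists>a b :: real. \<forall>x\<in>{e2 (i - 1)..e2 i}. f x = a * x + b"
    using assms(2) unfolding pwl_def by blast
  define e where "e i = (if i \<le> K1 then e1 i else e2 (i - K1))" for i
  have e_hi: "e i = e2 (i - K1)" if "i \<ge> K1" for i
    using that K1(3) K2(2) unfolding e_def by auto
  have mono: "\<forall>i<K1+K2. e i \<le> e (Suc i)"
  proof (intro allI impI)
    fix i assume i: "i < K1 + K2"
    show "e i \<le> e (Suc i)"
    proof (cases "i < K1")
      case True then show ?thesis using K1(4) unfolding e_def by auto
    next
      case False
      then have "e i = e2 (i - K1)" "e (Suc i) = e2 (Suc (i - K1))" using e_hi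
        by (auto simp: Suc_diff_le)
      then show ?thesis using K2(4) i False by auto
    qed
  qed
  have pieces: "\<forall>i\<in>{1..K1+K2}. \<exists>a b :: real. \<forall>x\<in>{e (i - 1)..e i}. f x = a * x + b"
  proof
    fix i assume i: "i \<in> {1..K1+K2}"
    show "\<exists>a b :: real. \<forall>x\<in>{e (i - 1)..e i}. f x = a * x + b"
    proof (cases "i \<le> K1")
      case True then show ?thesis using K1(5) i unfolding e_def by auto
    next
      case False
      then have "e (i - 1) = e2 (i - K1 - 1)" "e i = e2 (i - K1)" using e_hi by auto
      moreover have "i - K1 \<in> {1..K2}" using i False by auto
      then have "\<exists>a b :: real. \<forall>x\<in>{e2 (i - K1 - 1)..e2 (i - K1)}. f x = a * x + b"
        using K2(5) by blast
      ultimately show ?thesis by simp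
    qed
  qed
  show ?thesis unfolding pwl_def
    apply (rule exI[of _ "K1+K2"])
    apply (rule conjI) using K1 apply simp
    apply (rule exI[of _ e])
    using mono pieces K1(2) K2(3) e_hi[of "K1+K2"] unfolding e_def by auto
qed

lemma pwl_point: "pwl x x f"
  by (rule pwl_cong[OF pwl_affine[of x x 0 "f x"]]) auto

lemma pwl_min2:
  assumes "lo \<le> hi"
  shows "pwl lo hi (\<lambda>x. min (a1*x+b1) (a2*x+b2))"
proof (cases "a1 = a2")
  case True
  have "pwl lo hi (\<lambda>x. a1*x + min b1 b2)" using pwl_affine[OF assms] by blast
  then show ?thesis by (rule pwl_cong) (auto simp: True min_def)
next
  case False
  define c where "c = (b2 - b1) / (a1 - a2)"
  have d: "(a1*x+b1) - (a2*x+b2) = (a1-a2)*(x-c)" for x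
    using False unfolding c_def by (simp add: field_simps)
  have L: "\<exists>a b. \<forall>x. x \<le> c \<longrightarrow> min (a1*x+b1) (a2*x+b2) = a*x+b"
  proof (cases "a1 > a2")
    case True
    have "min (a1*x+b1) (a2*x+b2) = a1*x+b1" if xc: "x \<le> c" for x
    proof -
      have "0 \<le> a1 - a2 \<or> a1 - a2 \<le> 0" by linarith
      have m: "(a1-a2)*(x-c) \<le> 0" using True xc by (intro mult_nonneg_nonpos) auto
      show ?thesis using d[of x] m by (auto simp: min_def)
    qed
    then show ?thesis by blast
  next
    case F: False
    then have lt: "a1 < a2" using False by auto
    have "min (a1*x+b1) (a2*x+b2) = a2*x+b2" if xc: "x \<le> c" for x
    proof -
      have "0 \<le> a1 - a2 \<or> a1 - a2 \<le> 0" by linarith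
      have m: "0 \<le> (a1-a2)*(x-c)" using lt xc by (intro mult_nonpos_nonpos) auto
      show ?thesis using d[of x] m by (auto simp: min_def)
    qed
    then show ?thesis by blast
  qed
  have R: "\<exists>a b. \<forall>x. x \<ge> c \<longrightarrow> min (a1*x+b1) (a2*x+b2) = a*x+b"
  proof (cases "a1 > a2")
    case True
    have "min (a1*x+b1) (a2*x+b2) = a2*x+b2" if xc: "x \<ge> c" for x
    proof -
      have "0 \<le> a1 - a2 \<or> a1 - a2 \<le> 0" by linarith
      have m: "0 \<le> (a1-a2)*(x-c)" using True xc by (intro mult_nonneg_nonneg) auto
      show ?thesis using d[of x] m by (auto simp: min_def)
    qed
    then show ?thesis by blast
  next
    case F: False
    then have lt: "a1 < a2" using False by auto
    have "min (a1*x+b1) (a2*x+b2) = a1*x+b1" if xc: "x \<ge> c" for x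
    proof -
      have "0 \<le> a1 - a2 \<or> a1 - a2 \<le> 0" by linarith
      have m: "(a1-a2)*(x-c) \<le> 0" using lt xc by (intro mult_nonpos_nonneg) auto
      show ?thesis using d[of x] m by (auto simp: min_def)
    qed
    then show ?thesis by blast
  qed
  obtain aL bL where aL: "\<forall>x. x \<le> c \<longrightarrow> min (a1*x+b1) (a2*x+b2) = aL*x+bL" using L by blast
  obtain aR bR where aR: "\<forall>x. x \<ge> c \<longrightarrow> min (a1*x+b1) (a2*x+b2) = aR*x+bR" using R by blast
  show ?thesis
  proof (cases "c \<le> lo")
    case True
    show ?thesis by (rule pwl_cong[OF pwl_affine[OF assms, of aR bR]]) (use aR True in auto)
  next
    case F1: False
    show ?thesis
    proof (cases "hi \<le> c")
      case True
      show ?thesis by (rule pwl_cong[OF pwl_affine[OF assms, of aL bL]]) (use aL True in auto)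
    next
      case False
      have p1: "pwl lo c (\<lambda>x. min (a1*x+b1) (a2*x+b2))"
        by (rule pwl_cong[OF pwl_affine[of lo c aL bL]]) (use aL F1 in auto)
      have p2: "pwl c hi (\<lambda>x. min (a1*x+b1) (a2*x+b2))"
        by (rule pwl_cong[OF pwl_affine[of c hi aR bR]]) (use aR False in auto)
      show ?thesis by (rule pwl_concat[OF p1 p2])
    qed
  qed
qed

lemma pwl_min_aff:
  assumes "pwl lo hi f"
  shows "pwl lo hi (\<lambda>x. min (f x) (a*x+b))"
proof -
  obtain K e where K: "K \<ge> 1" "e 0 = lo" "e K = hi" "\<forall>i<K. e i \<le> e (Suc i)"
    "\<forall>i\<in>{1..K}. \<exists>a b :: real. \<forall>x\<in>{e (i - 1)..e i}. f x = a * x + b"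
    using assms unfolding pwl_def by blast
  have "k \<le> K \<Longrightarrow> pwl (e 0) (e k) (\<lambda>x. min (f x) (a*x+b))" for k
  proof (induction k)
    case 0 show ?case by (rule pwl_point)
  next
    case (Suc k)
    then have IH: "pwl (e 0) (e k) (\<lambda>x. min (f x) (a*x+b))" by simp
    have "Suc k \<in> {1..K}" using Suc by auto
    then obtain a1 b1 where ab: "\<forall>x\<in>{e k..e (Suc k)}. f x = a1 * x + b1" using K(5) by fastforce
    have le: "e k \<le> e (Suc k)" using K(4) Suc by auto
    have "pwl (e k) (e (Suc k)) (\<lambda>x. min (f x) (a*x+b))"
      by (rule pwl_cong[OF pwl_min2[OF le, of a1 b1 a b]]) (use ab in auto)
    then show ?case by (rule pwl_concat[OF IH])
  qed
  from this[of K] show ?thesis using K by simp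
qed

lemma pwl_Min:
  assumes "finite I" "I \<noteq> {}" "lo \<le> hi"
  shows "pwl lo hi (\<lambda>x. Min ((\<lambda>i. a i * x + b i) ` I))"
  using assms(1,2)
proof (induction I rule: finite_ne_induct)
  case (singleton j)
  then show ?case using pwl_affine[OF assms(3)] by simp
next
  case (insert j I)
  have "pwl lo hi (\<lambda>x. min (Min ((\<lambda>i. a i * x + b i) ` I)) (a j * x + b j))"
    by (rule pwl_min_aff[OF insert.IH])
  then show ?case by (rule pwl_cong) (use insert in \<open>auto simp: min.commute\<close>)
qed



definition diag :: "nat \<Rightarrow> nat \<Rightarrow> (nat \<Rightarrow> nat \<Rightarrow> real) \<Rightarrow> (nat \<Rightarrow> nat \<Rightarrow> real) \<Rightarrow> real" where
  "diag M N P W = (\<Sum>y=1..N. \<Sum>x=1..M. P x y * W y y)"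

lemma pc_le:
  assumes "M \<ge> 1" "N \<ge> 1"
  shows "Pc_X M N P \<le> Pc_X_given_Y M N P"
  unfolding Pc_X_def Pc_X_given_Y_def
proof (subst Max_le_iff)
  show "\<forall>a\<in>(\<lambda>x. \<Sum>y = 1..N. P x y) ` {1..M}. a \<le> (\<Sum>y = 1..N. Max ((\<lambda>x. P x y) ` {1..M}))"
  proof
    fix a assume "a \<in> (\<lambda>x. \<Sum>y = 1..N. P x y) ` {1..M}"
    then obtain x where x: "x \<in> {1..M}" "a = (\<Sum>y = 1..N. P x y)" by auto
    have "(\<Sum>y = 1..N. P x y) \<le> (\<Sum>y = 1..N. Max ((\<lambda>x. P x y) ` {1..M}))"
      by (rule sum_mono) (use x in auto)
    then show "a \<le> (\<Sum>y = 1..N. Max ((\<lambda>x. P x y) ` {1..M}))" using x by simp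
  qed
qed (use assms in auto)

lemma diag_le:
  assumes "channel N N W"
  shows "diag M N P W \<le> Pc_Y_given_Z M N P N W"
  unfolding diag_def Pc_Y_given_Z_def
  by (rule sum_mono) (rule Max_ge, auto)

lemma Pcy_bound:
  assumes "joint_pmf M N P" "channel N L W" "N \<ge> 1"
  shows "Pc_Y_given_Z M N P L W \<le> 1"
proof -
  have nn: "0 \<le> (\<Sum>x=1..M. P x y * W y z)" if "y \<in> {1..N}" "z \<in> {1..L}" for y z
    using assms(1,2) that unfolding joint_pmf_def channel_def by (intro sum_nonneg) auto
  have "Max ((\<lambda>y. \<Sum>x=1..M. P x y * W y z) ` {1..N}) \<le> (\<Sum>y=1..N. \<Sum>x=1..M. P x y * W y z)"
    if z: "z \<in> {1..L}" for z
  proof (subst Max_le_iff)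
    show "\<forall>a\<in>(\<lambda>y. \<Sum>x = 1..M. P x y * W y z) ` {1..N}. a \<le> (\<Sum>y = 1..N. \<Sum>x = 1..M. P x y * W y z)"
    proof
      fix a assume "a \<in> (\<lambda>y. \<Sum>x = 1..M. P x y * W y z) ` {1..N}"
      then obtain y where y: "y \<in> {1..N}" "a = (\<Sum>x = 1..M. P x y * W y z)" by auto
      show "a \<le> (\<Sum>y = 1..N. \<Sum>x = 1..M. P x y * W y z)"
        unfolding y(2) by (rule member_le_sum[OF y(1)]) (use nn z in auto)
    qed
  qed (use assms in auto)
  then have "Pc_Y_given_Z M N P L W \<le> (\<Sum>z=1..L. \<Sum>y=1..N. \<Sum>x=1..M. P x y * W y z)"
    unfolding Pc_Y_given_Z_def by (rule sum_mono)
  also have "\<dots> = (\<Sum>y=1..N. \<Sum>x=1..M. \<Sum>z=1..L. P x y * W y z)"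
    by (subst sum.swap, rule sum.cong[OF refl], rule sum.swap)
  also have "\<dots> = (\<Sum>y=1..N. \<Sum>x=1..M. P x y * (\<Sum>z=1..L. W y z))"
    by (simp add: sum_distrib_left)
  also have "\<dots> = (\<Sum>y=1..N. \<Sum>x=1..M. P x y)"
    using assms(2) unfolding channel_def by (intro sum.cong) auto
  also have "\<dots> = (\<Sum>x=1..M. \<Sum>y=1..N. P x y)" by (rule sum.swap)
  also have "\<dots> = 1" using assms(1) unfolding joint_pmf_def by simp
  finally show ?thesis .
qed

lemma const_channel:
  assumes "M \<ge> 1" "N \<ge> 1"
  defines "W0 \<equiv> (\<lambda>y z. if z = 1 then 1 else 0 :: real)"
  shows "channel N N W0 \<and> Pc_X_given_Z M N P N W0 = Pc_X M N P"
proof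
  show "channel N N W0" unfolding channel_def W0_def using assms by auto
  have "Max ((\<lambda>x. \<Sum>y=1..N. P x y * W0 y z) ` {1..M}) = (if z = 1 then Pc_X M N P else 0)" for z
    unfolding W0_def Pc_X_def using assms by (cases "z = 1") auto
  then show "Pc_X_given_Z M N P N W0 = Pc_X M N P" unfolding Pc_X_given_Z_def using assms by simp
qed

lemma merge:
  assumes "channel N L W" "N \<ge> 1" "M \<ge> 1"
  shows "\<exists>W'. channel N N W' \<and> Pc_X_given_Z M N P N W' \<le> Pc_X_given_Z M N P L W
           \<and> diag M N P W' = Pc_Y_given_Z M N P L W"
proof -
  define f where "f z = Max ((\<lambda>y. \<Sum>x=1..M. P x y * W y z) ` {1..N})" for z
  define ys where "ys z = (SOME y. y \<in> {1..N} \<and> (\<Sum>x=1..M. P x y * W y z) = f z)" for z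
  have ys: "ys z \<in> {1..N} \<and> (\<Sum>x=1..M. P x (ys z) * W (ys z) z) = f z" for z
  proof -
    have "f z \<in> (\<lambda>y. \<Sum>x=1..M. P x y * W y z) ` {1..N}" unfolding f_def
      by (rule Max_in) (use assms in auto)
    then have "\<exists>y. y \<in> {1..N} \<and> (\<Sum>x=1..M. P x y * W y z) = f z" by auto
    then show ?thesis unfolding ys_def by (rule someI_ex)
  qed
  define G where "G y0 = {z \<in> {1..L}. ys z = y0}" for y0
  define W' where "W' y y0 = (\<Sum>z\<in>G y0. W y z)" for y y0
  have grp: "(\<Sum>y0=1..N. \<Sum>z\<in>G y0. h z) = (\<Sum>z=1..L. h z)" for h :: "nat \<Rightarrow> real"
    unfolding G_def by (rule sum.group) (use ys in auto)
  have ch: "channel N N W'"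
    unfolding channel_def
  proof (intro ballI conjI)
    fix y z assume y: "y \<in> {1..N}" and "z \<in> {1..N}"
    show "0 \<le> W' y z" unfolding W'_def G_def using assms(1) y unfolding channel_def
      by (intro sum_nonneg) auto
  next
    fix y assume y: "y \<in> {1..N}"
    show "(\<Sum>z=1..N. W' y z) = 1" unfolding W'_def grp using assms(1) y unfolding channel_def by auto
  qed
  have gle: "Pc_X_given_Z M N P N W' \<le> Pc_X_given_Z M N P L W"
  proof -
    have "Max ((\<lambda>x. \<Sum>y=1..N. P x y * W' y y0) ` {1..M})
        \<le> (\<Sum>z\<in>G y0. Max ((\<lambda>x. \<Sum>y=1..N. P x y * W y z) ` {1..M}))" for y0
    proof -
      have False: "M \<noteq> 0" using assms by simp
      show ?thesis
      proof (subst Max_le_iff, simp, use False in simp, intro ballI)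
        fix a assume "a \<in> (\<lambda>x. \<Sum>y=1..N. P x y * W' y y0) ` {1..M}"
        then obtain x where x: "x \<in> {1..M}" "a = (\<Sum>y=1..N. P x y * W' y y0)" by auto
        have "a = (\<Sum>z\<in>G y0. \<Sum>y=1..N. P x y * W y z)"
          unfolding x W'_def by (simp add: sum_distrib_left sum.swap[of _ "G y0"])
        also have "\<dots> \<le> (\<Sum>z\<in>G y0. Max ((\<lambda>x. \<Sum>y=1..N. P x y * W y z) ` {1..M}))"
          by (rule sum_mono, rule Max_ge) (use x in auto)
        finally show "a \<le> (\<Sum>z\<in>G y0. Max ((\<lambda>x. \<Sum>y=1..N. P x y * W y z) ` {1..M}))" .
      qed
    qed
    then have "Pc_X_given_Z M N P N W' \<le> (\<Sum>y0=1..N. \<Sum>z\<in>G y0. Max ((\<lambda>x. \<Sum>y=1..N. P x y * W y z) ` {1..M}))"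
      unfolding Pc_X_given_Z_def by (rule sum_mono)
    also have "\<dots> = Pc_X_given_Z M N P L W" unfolding grp Pc_X_given_Z_def ..
    finally show ?thesis .
  qed
  have "diag M N P W' = (\<Sum>y0=1..N. \<Sum>z\<in>G y0. \<Sum>x=1..M. P x y0 * W y0 z)"
    unfolding diag_def W'_def by (simp add: sum_distrib_left sum.swap[of _ "G _"])
  also have "\<dots> = (\<Sum>y0=1..N. \<Sum>z\<in>G y0. f z)"
  proof (rule sum.cong[OF refl], rule sum.cong[OF refl])
    fix y0 z assume "z \<in> G y0"
    then have "ys z = y0" unfolding G_def by auto
    then show "(\<Sum>x=1..M. P x y0 * W y0 z) = f z" using ys[of z] by simp
  qed
  also have "\<dots> = Pc_Y_given_Z M N P L W" unfolding grp Pc_Y_given_Z_def f_def ..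
  finally show ?thesis using ch gle by blast
qed



datatype var = Eps | Tv | Wv nat nat | Mv nat

definition VV :: "nat \<Rightarrow> var set" where
  "VV N = {Eps, Tv} \<union> (\<lambda>(y,z). Wv y z) ` ({1..N}\<times>{1..N}) \<union> Mv ` {1..N}"

lemma finite_VV: "finite (VV N)" unfolding VV_def by auto

lemma sumVV:
  "(\<Sum>v\<in>VV N. f v) = f Eps + f Tv + (\<Sum>y=1..N. \<Sum>z=1..N. f (Wv y z)) + (\<Sum>z=1..N. f (Mv z))"
proof -
  have inj1: "inj_on (\<lambda>(y,z). Wv y z) ({1..N}\<times>{1..N})" by (auto simp: inj_on_def)
  have inj2: "inj_on Mv {1..N}" by (auto simp: inj_on_def)
  have "(\<Sum>v\<in>VV N. f v) = (\<Sum>v\<in>{Eps, Tv} \<union> (\<lambda>(y,z). Wv y z) ` ({1..N}\<times>{1..N}). f v) + (\<Sum>v\<in>Mv ` {1..N}. f v)"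
    unfolding VV_def by (rule sum.union_disjoint) auto
  also have "(\<Sum>v\<in>{Eps, Tv} \<union> (\<lambda>(y,z). Wv y z) ` ({1..N}\<times>{1..N}). f v)
     = (\<Sum>v\<in>{Eps, Tv}. f v) + (\<Sum>v\<in>(\<lambda>(y,z). Wv y z) ` ({1..N}\<times>{1..N}). f v)"
    by (rule sum.union_disjoint) auto
  also have "(\<Sum>v\<in>(\<lambda>(y,z). Wv y z) ` ({1..N}\<times>{1..N}). f v) = (\<Sum>(y,z)\<in>{1..N}\<times>{1..N}. f (Wv y z))"
    by (subst sum.reindex[OF inj1]) (simp add: case_prod_unfold)
  also have "\<dots> = (\<Sum>y=1..N. \<Sum>z=1..N. f (Wv y z))" by (rule sum.cartesian_product[symmetric])
  also have "(\<Sum>v\<in>Mv ` {1..N}. f v) = (\<Sum>z=1..N. f (Mv z))" by (simp only: sum.reindex[OF inj2] comp_def)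
  finally show ?thesis by simp
qed

definition CC :: "nat \<Rightarrow> nat \<Rightarrow> (nat \<Rightarrow> nat \<Rightarrow> real) \<Rightarrow> ((var \<Rightarrow> real) \<times> real) set" where
  "CC M N P =
     (\<lambda>(y,z). ((\<lambda>v. if v = Wv y z then -1 else 0), 0)) ` ({1..N}\<times>{1..N})
   \<union> (\<lambda>y. ((\<lambda>v. case v of Wv y' z \<Rightarrow> if y' = y then 1 else 0 | _ \<Rightarrow> 0), 1)) ` {1..N}
   \<union> (\<lambda>y. ((\<lambda>v. case v of Wv y' z \<Rightarrow> if y' = y then -1 else 0 | _ \<Rightarrow> 0), -1)) ` {1..N}
   \<union> (\<lambda>(x,z). ((\<lambda>v. case v of Wv y z' \<Rightarrow> if z' = z then P x y else 0 | Mv z' \<Rightarrow> if z' = z then -1 else 0 | _ \<Rightarrow> 0), 0)) ` ({1..M}\<times>{1..N})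
   \<union> {((\<lambda>v. case v of Mv z \<Rightarrow> 1 | Eps \<Rightarrow> -1 | _ \<Rightarrow> 0), 0)}
   \<union> {((\<lambda>v. case v of Tv \<Rightarrow> 1 | Wv y z \<Rightarrow> if y = z then - (\<Sum>x=1..M. P x y) else 0 | _ \<Rightarrow> 0), 0)}
   \<union> {((\<lambda>v. case v of Tv \<Rightarrow> -1 | Wv y z \<Rightarrow> if y = z then (\<Sum>x=1..M. P x y) else 0 | _ \<Rightarrow> 0), 0)}"

lemma finite_CC: "finite (CC M N P)" unfolding CC_def by auto

lemma sat_Un: "sat V (A \<union> B) u \<longleftrightarrow> sat V A u \<and> sat V B u" unfolding sat_def by blast
lemma sat_image: "sat V (f ` S) u \<longleftrightarrow> (\<forall>s\<in>S. (\<Sum>i\<in>V. fst (f s) i * u i) \<le> snd (f s))"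
  unfolding sat_def by (auto simp: case_prod_unfold)
lemma sat_single: "sat V {(c,d)} u \<longleftrightarrow> (\<Sum>i\<in>V. c i * u i) \<le> d"
  unfolding sat_def by auto

lemma ifz: "(if b then a else (0::real)) * c = (if b then a * c else 0)" by simp
lemma sum_ifc: "(\<Sum>z\<in>S. if b then f z else (0::real)) = (if b then (\<Sum>z\<in>S. f z) else 0)" by simp
lemma sum_diag: "finite S \<Longrightarrow> (\<Sum>y\<in>S. \<Sum>z\<in>S. if y = z then f y z else (0::real)) = (\<Sum>y\<in>S. f y y)"
  by (rule sum.cong) auto

lemma ev1:
  fixes u :: "var \<Rightarrow> real"
  assumes "y \<in> {1..N}" "z \<in> {1..N}"
  shows "(\<Sum>v\<in>VV N. (if v = Wv y z then -1 else 0) * u v) = - u (Wv y z)"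
proof -
  have "Wv y z \<in> VV N" unfolding VV_def using assms by auto
  then show ?thesis by (simp only: ifz sum.delta finite_VV) simp
qed

lemma ev2:
  fixes u :: "var \<Rightarrow> real"
  assumes "y \<in> {1..N}"
  shows "(\<Sum>v\<in>VV N. (case v of Wv y' z \<Rightarrow> if y' = y then k else 0 | _ \<Rightarrow> 0) * u v) = k * (\<Sum>z=1..N. u (Wv y z))"
  unfolding sumVV using assms by (simp add: ifz sum_ifc sum_distrib_left)

lemma ev3:
  fixes u :: "var \<Rightarrow> real"
  assumes "z \<in> {1..N}"
  shows "(\<Sum>v\<in>VV N. (case v of Wv y z' \<Rightarrow> if z' = z then P x y else 0 | Mv z' \<Rightarrow> if z' = z then -1 else 0 | _ \<Rightarrow> 0) * u v)
     = (\<Sum>y=1..N. P x y * u (Wv y z)) - u (Mv z)"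
  unfolding sumVV using assms by (simp add: ifz)

lemma ev4:
  fixes u :: "var \<Rightarrow> real"
  shows "(\<Sum>v\<in>VV N. (case v of Mv z \<Rightarrow> 1 | Eps \<Rightarrow> -1 | _ \<Rightarrow> 0) * u v) = (\<Sum>z=1..N. u (Mv z)) - u Eps"
  unfolding sumVV by simp

lemma ev5a:
  fixes u :: "var \<Rightarrow> real"
  shows "(\<Sum>v\<in>VV N. (case v of Tv \<Rightarrow> 1 | Wv y z \<Rightarrow> if y = z then - (\<Sum>x=1..M. P x y) else 0 | _ \<Rightarrow> 0) * u v)
    = u Tv - (\<Sum>y=1..N. (\<Sum>x=1..M. P x y) * u (Wv y y))"
  unfolding sumVV by (simp add: ifz sum_diag sum_negf)

lemma ev5b:
  fixes u :: "var \<Rightarrow> real"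
  shows "(\<Sum>v\<in>VV N. (case v of Tv \<Rightarrow> -1 | Wv y z \<Rightarrow> if y = z then (\<Sum>x=1..M. P x y) else 0 | _ \<Rightarrow> 0) * u v)
    = - u Tv + (\<Sum>y=1..N. (\<Sum>x=1..M. P x y) * u (Wv y y))"
  unfolding sumVV by (simp add: ifz sum_diag)

lemma sat_CC:
  fixes u :: "var \<Rightarrow> real"
  shows "sat (VV N) (CC M N P) u \<longleftrightarrow>
     (\<forall>y\<in>{1..N}. \<forall>z\<in>{1..N}. 0 \<le> u (Wv y z))
   \<and> (\<forall>y\<in>{1..N}. (\<Sum>z=1..N. u (Wv y z)) = 1)
   \<and> (\<forall>x\<in>{1..M}. \<forall>z\<in>{1..N}. (\<Sum>y=1..N. P x y * u (Wv y z)) \<le> u (Mv z))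
   \<and> (\<Sum>z=1..N. u (Mv z)) \<le> u Eps
   \<and> u Tv = (\<Sum>y=1..N. (\<Sum>x=1..M. P x y) * u (Wv y y))"
proof -
  have e2a: "y \<in> {1..N} \<Longrightarrow> (\<Sum>v\<in>VV N. (case v of Wv y' z \<Rightarrow> if y' = y then 1 else 0 | _ \<Rightarrow> 0) * u v) = (\<Sum>z=1..N. u (Wv y z))" for y
    using ev2[where k=1 and u=u] by simp
  have e2b: "y \<in> {1..N} \<Longrightarrow> (\<Sum>v\<in>VV N. (case v of Wv y' z \<Rightarrow> if y' = y then -1 else 0 | _ \<Rightarrow> 0) * u v) = - (\<Sum>z=1..N. u (Wv y z))" for y
    using ev2[where k="-1" and u=u] by simp
  show ?thesis
    unfolding CC_def sat_Un sat_image sat_single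
    by (auto simp: ev1 e2a e2b ev3 ev4 ev5a ev5b) (meson atLeastAtMost_iff order_antisym)
qed



lemma sup2d:
  fixes C :: "(('v \<Rightarrow> real) \<times> real) set"
  assumes fin: "finite C" and bnd: "\<forall>t\<in>S. t \<le> B" and t0: "t0 \<in> S"
    and S: "S = {t. \<forall>(c,d)\<in>C. c e1 * x + c e2 * t \<le> d}"
  shows "{cd\<in>C. fst cd e2 > 0} \<noteq> {} \<and> Sup S = Min ((\<lambda>(c,d). (d - c e1 * x) / c e2) ` {cd\<in>C. fst cd e2 > 0})"
proof -
  define Cp where "Cp = {cd\<in>C. fst cd e2 > 0}"
  have t0c: "c e1 * x + c e2 * t0 \<le> d" if "(c,d) \<in> C" for c d using t0 that unfolding S by auto
  have ne: "Cp \<noteq> {}"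
  proof
    assume emp: "Cp = {}"
    define t' where "t' = max t0 (B + 1)"
    have "t' \<in> S" unfolding S
    proof (clarify)
      fix c d assume cd: "(c,d) \<in> C"
      then have "c e2 \<le> 0" using emp unfolding Cp_def by force
      then have "c e2 * t' \<le> c e2 * t0" unfolding t'_def by (intro mult_left_mono_neg) auto
      then show "c e1 * x + c e2 * t' \<le> d" using t0c[OF cd] by linarith
    qed
    then have "t' \<le> B" using bnd by auto
    then show False unfolding t'_def by auto
  qed
  define U where "U = Min ((\<lambda>(c,d). (d - c e1 * x) / c e2) ` Cp)"
  have finCp: "finite Cp" unfolding Cp_def using fin by auto
  have Ule: "U \<le> (d - c e1 * x) / c e2" if "(c,d) \<in> Cp" for c d
    unfolding U_def using finCp that by (intro Min_le) auto
  have leU: "t \<le> U" if "t \<in> S" for t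
    unfolding U_def
  proof (subst Min_ge_iff)
    show "\<forall>a\<in>(\<lambda>(c,d). (d - c e1 * x) / c e2) ` Cp. t \<le> a"
    proof clarify
      fix c d assume cd: "(c,d) \<in> Cp"
      then have "c e1 * x + c e2 * t \<le> d" "c e2 > 0" using that unfolding S Cp_def by auto
      then show "t \<le> (d - c e1 * x) / c e2" by (simp add: pos_le_divide_eq algebra_simps)
    qed
  qed (use finCp ne in auto)
  have US: "U \<in> S" unfolding S
  proof clarify
    fix c d assume cd: "(c,d) \<in> C"
    show "c e1 * x + c e2 * U \<le> d"
    proof (cases "c e2 > 0")
      case True
      then have "U \<le> (d - c e1 * x) / c e2" using Ule cd unfolding Cp_def by auto
      then show ?thesis using True by (simp add: pos_le_divide_eq algebra_simps)
    next
      case False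
      have "t0 \<le> U" using leU t0 by auto
      then have "c e2 * U \<le> c e2 * t0" using False by (intro mult_left_mono_neg) auto
      then show ?thesis using t0c[OF cd] by linarith
    qed
  qed
  have "Sup S = U" by (rule cSup_eq_maximum[OF US]) (use leU in auto)
  then show ?thesis using ne unfolding Cp_def U_def by auto
qed

lemma lp_equiv:
  assumes "M \<ge> 1"
  shows "(\<exists>W. channel N N W \<and> Pc_X_given_Z M N P N W \<le> \<epsilon> \<and> diag M N P W = t)
     \<longleftrightarrow> (\<exists>u. u Eps = \<epsilon> \<and> u Tv = t \<and> sat (VV N) (CC M N P) u)"
proof
  assume "\<exists>W. channel N N W \<and> Pc_X_given_Z M N P N W \<le> \<epsilon> \<and> diag M N P W = t"
  then obtain W where W: "channel N N W" "Pc_X_given_Z M N P N W \<le> \<epsilon>" "diag M N P W = t" by blast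
  define u where "u v = (case v of Eps \<Rightarrow> \<epsilon> | Tv \<Rightarrow> t | Wv y z \<Rightarrow> W y z
     | Mv z \<Rightarrow> Max ((\<lambda>x. \<Sum>y=1..N. P x y * W y z) ` {1..M}))" for v
  have "sat (VV N) (CC M N P) u"
    unfolding sat_CC
  proof (intro conjI ballI)
    fix y z assume "y \<in> {1..N}" "z \<in> {1..N}"
    then show "0 \<le> u (Wv y z)" using W(1) unfolding channel_def u_def by auto
  next
    fix y assume "y \<in> {1..N}"
    then show "(\<Sum>z=1..N. u (Wv y z)) = 1" using W(1) unfolding channel_def u_def by auto
  next
    fix x z assume "x \<in> {1..M}" "z \<in> {1..N}"
    then show "(\<Sum>y=1..N. P x y * u (Wv y z)) \<le> u (Mv z)" unfolding u_def
      by simp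
  next
    show "(\<Sum>z=1..N. u (Mv z)) \<le> u Eps" using W(2) unfolding u_def Pc_X_given_Z_def by simp
  next
    show "u Tv = (\<Sum>y=1..N. (\<Sum>x=1..M. P x y) * u (Wv y y))"
      using W(3) unfolding u_def diag_def by (simp add: sum_distrib_right)
  qed
  moreover have "u Eps = \<epsilon>" "u Tv = t" by (simp_all add: u_def)
  ultimately show "\<exists>u. u Eps = \<epsilon> \<and> u Tv = t \<and> sat (VV N) (CC M N P) u" by blast
next
  assume "\<exists>u. u Eps = \<epsilon> \<and> u Tv = t \<and> sat (VV N) (CC M N P) u"
  then obtain u where u: "u Eps = \<epsilon>" "u Tv = t" "sat (VV N) (CC M N P) u" by blast
  note c = u(3)[unfolded sat_CC]
  note c1 = conjunct1[OF c]
  note c2 = conjunct1[OF conjunct2[OF c]]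
  note c3 = conjunct1[OF conjunct2[OF conjunct2[OF c]]]
  note c4 = conjunct1[OF conjunct2[OF conjunct2[OF conjunct2[OF c]]]]
  note c5 = conjunct2[OF conjunct2[OF conjunct2[OF conjunct2[OF c]]]]
  define W where "W y z = u (Wv y z)" for y z
  have ch: "channel N N W" unfolding channel_def W_def using c1 c2 by blast
  have "Pc_X_given_Z M N P N W \<le> (\<Sum>z=1..N. u (Mv z))"
    unfolding Pc_X_given_Z_def
  proof (rule sum_mono)
    fix z assume z: "z \<in> {1..N}"
    show "Max ((\<lambda>x. \<Sum>y=1..N. P x y * W y z) ` {1..M}) \<le> u (Mv z)"
    proof (subst Max_le_iff)
      show "\<forall>a\<in>(\<lambda>x. \<Sum>y=1..N. P x y * W y z) ` {1..M}. a \<le> u (Mv z)"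
        using c3 z unfolding W_def by blast
    qed (use assms in auto)
  qed
  then have g: "Pc_X_given_Z M N P N W \<le> \<epsilon>" using c4 u(1) by linarith
  have "diag M N P W = t" using c5 u(2) unfolding diag_def W_def by (simp add: sum_distrib_right)
  then show "\<exists>W. channel N N W \<and> Pc_X_given_Z M N P N W \<le> \<epsilon> \<and> diag M N P W = t" using ch g by blast
qed

lemma hsup:
  assumes "joint_pmf M N P" "M \<ge> 1" "N \<ge> 1" "Pc_X M N P \<le> \<epsilon>"
  shows "hfun M N P \<epsilon> = Sup {diag M N P W | W. channel N N W \<and> Pc_X_given_Z M N P N W \<le> \<epsilon>}"
    and "{diag M N P W | W. channel N N W \<and> Pc_X_given_Z M N P N W \<le> \<epsilon>} \<noteq> {}"
    and "\<forall>t\<in>{diag M N P W | W. channel N N W \<and> Pc_X_given_Z M N P N W \<le> \<epsilon>}. t \<le> 1"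
proof -
  define S where "S = {Pc_Y_given_Z M N P L W | L W. channel N L W \<and> Pc_X_given_Z M N P L W \<le> \<epsilon>}"
  define D where "D = {diag M N P W | W. channel N N W \<and> Pc_X_given_Z M N P N W \<le> \<epsilon>}"
  obtain W0 where W0: "channel N N W0" "Pc_X_given_Z M N P N W0 = Pc_X M N P"
    using const_channel[OF assms(2,3)] by blast
  have Sne: "S \<noteq> {}" unfolding S_def using W0 assms(4) by fastforce
  have Dne: "D \<noteq> {}" unfolding D_def using W0 assms(4) by fastforce
  have Sb: "\<forall>s\<in>S. s \<le> 1" unfolding S_def using Pcy_bound[OF assms(1) _ assms(3)] by auto
  have Db: "\<forall>t\<in>D. t \<le> 1"
  proof
    fix t assume "t \<in> D"
    then obtain W where "channel N N W" "t = diag M N P W" unfolding D_def by auto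
    then show "t \<le> 1" using diag_le[of N W M P] Pcy_bound[OF assms(1) _ assms(3)] by force
  qed
  have "Sup S \<le> Sup D"
  proof (rule cSup_least[OF Sne])
    fix s assume "s \<in> S"
    then obtain L W where LW: "channel N L W" "Pc_X_given_Z M N P L W \<le> \<epsilon>" "s = Pc_Y_given_Z M N P L W"
      unfolding S_def by auto
    obtain W' where "channel N N W'" "Pc_X_given_Z M N P N W' \<le> Pc_X_given_Z M N P L W"
      "diag M N P W' = Pc_Y_given_Z M N P L W" using merge[OF LW(1) assms(3,2)] by blast
    then have "s \<in> D" unfolding D_def using LW by force
    then show "s \<le> Sup D" using Db by (intro cSup_upper) (auto simp: bdd_above_def)
  qed
  moreover have "Sup D \<le> Sup S"
  proof (rule cSup_least[OF Dne])
    fix t assume "t \<in> D"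
    then obtain W where W: "channel N N W" "Pc_X_given_Z M N P N W \<le> \<epsilon>" "t = diag M N P W"
      unfolding D_def by auto
    have "Pc_Y_given_Z M N P N W \<in> S" unfolding S_def using W by auto
    then have "Pc_Y_given_Z M N P N W \<le> Sup S" using Sb by (intro cSup_upper) (auto simp: bdd_above_def)
    then show "t \<le> Sup S" using diag_le[OF W(1), of M P] W(3) by linarith
  qed
  ultimately show "hfun M N P \<epsilon> = Sup D" unfolding hfun_def S_def by linarith
  show "D \<noteq> {}" by (rule Dne)
  show "\<forall>t\<in>D. t \<le> 1" by (rule Db)
qed

theorem theorem1:
  fixes M N :: nat and P :: "nat \<Rightarrow> nat \<Rightarrow> real"
  assumes "M \<ge> 1" and "N \<ge> 1" and "joint_pmf M N P"
  shows "\<exists>K::nat. K \<ge> 1 \<and> (\<exists>e :: nat \<Rightarrow> real.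
           e 0 = Pc_X M N P \<and> e K = Pc_X_given_Y M N P
         \<and> (\<forall>i<K. e i \<le> e (Suc i))
         \<and> (\<forall>i\<in>{1..K}. \<exists>a b :: real. \<forall>\<epsilon>\<in>{e (i - 1)..e i}. hfun M N P \<epsilon> = a * \<epsilon> + b))"
proof -
  have sub: "VV N - {Eps, Tv} \<subseteq> VV N" by auto
  from fm[OF finite_VV finite_CC sub]
  obtain C' where C'a: "finite C' \<and> (\<forall>u. sat (VV N - (VV N - {Eps, Tv})) C' u \<longleftrightarrow>
      (\<exists>u'. (\<forall>i\<in>VV N - (VV N - {Eps, Tv}). u' i = u i) \<and> sat (VV N) (CC M N P) u'))" ..
  note C' = conjunct1[OF C'a] conjunct2[OF C'a]
  have VE: "VV N - (VV N - {Eps, Tv}) = {Eps, Tv}" unfolding VV_def by auto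
  define D where "D \<epsilon> = {diag M N P W | W. channel N N W \<and> Pc_X_given_Z M N P N W \<le> \<epsilon>}" for \<epsilon>
  have Deq: "D \<epsilon> = {t. \<forall>(c,d)\<in>C'. c Eps * \<epsilon> + c Tv * t \<le> d}" for \<epsilon>
  proof (intro set_eqI)
    fix t
    define u0 where "u0 v = (if v = Eps then \<epsilon> else t)" for v
    have s2: "sat {Eps, Tv} C' u0 \<longleftrightarrow> (\<forall>(c,d)\<in>C'. c Eps * \<epsilon> + c Tv * t \<le> d)"
      unfolding sat_def u0_def by simp
    have "sat {Eps, Tv} C' u0 \<longleftrightarrow> (\<exists>u'. (\<forall>i\<in>{Eps, Tv}. u' i = u0 i) \<and> sat (VV N) (CC M N P) u')"
      using C'(2)[rule_format, of u0] unfolding VE .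
    also have "\<dots> \<longleftrightarrow> (\<exists>u'. u' Eps = \<epsilon> \<and> u' Tv = t \<and> sat (VV N) (CC M N P) u')"
      unfolding u0_def by simp
    also have "\<dots> \<longleftrightarrow> (\<exists>W. channel N N W \<and> Pc_X_given_Z M N P N W \<le> \<epsilon> \<and> diag M N P W = t)"
      by (rule lp_equiv[OF assms(1), symmetric])
    finally show "t \<in> D \<epsilon> \<longleftrightarrow> t \<in> {t. \<forall>(c,d)\<in>C'. c Eps * \<epsilon> + c Tv * t \<le> d}"
      unfolding D_def s2 by auto
  qed
  define Cp where "Cp = {cd\<in>C'. fst cd Tv > 0}"
  define a :: "(var \<Rightarrow> real) \<times> real \<Rightarrow> real" where "a = (\<lambda>(c,d). - c Eps / c Tv)"
  define b :: "(var \<Rightarrow> real) \<times> real \<Rightarrow> real" where "b = (\<lambda>(c,d). d / c Tv)"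
  have hv: "Cp \<noteq> {} \<and> hfun M N P \<epsilon> = Min ((\<lambda>i. a i * \<epsilon> + b i) ` Cp)" if "Pc_X M N P \<le> \<epsilon>" for \<epsilon>
  proof -
    note hs = hsup[OF assms(3,1,2) that, folded D_def]
    obtain t0 where "t0 \<in> D \<epsilon>" using hs(2) by blast
    from sup2d[OF C'(1) hs(3) this Deq]
    have r: "Cp \<noteq> {}" "Sup (D \<epsilon>) = Min ((\<lambda>(c,d). (d - c Eps * \<epsilon>) / c Tv) ` Cp)"
      unfolding Cp_def by auto
    have "(\<lambda>(c,d). (d - c Eps * \<epsilon>) / c Tv) ` Cp = (\<lambda>i. a i * \<epsilon> + b i) ` Cp"
      unfolding a_def b_def by (intro image_cong) (auto simp: diff_divide_distrib)
    then show ?thesis using r hs(1) by simp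
  qed
  have le: "Pc_X M N P \<le> Pc_X_given_Y M N P" by (rule pc_le[OF assms(1,2)])
  have finCp: "finite Cp" unfolding Cp_def using C'(1) by auto
  have ne: "Cp \<noteq> {}" using hv[OF order.refl] by blast
  have "pwl (Pc_X M N P) (Pc_X_given_Y M N P) (\<lambda>x. Min ((\<lambda>i. a i * x + b i) ` Cp))"
    by (rule pwl_Min[OF finCp ne le])
  then have "pwl (Pc_X M N P) (Pc_X_given_Y M N P) (hfun M N P)"
    by (rule pwl_cong) (use hv in auto)
  then show ?thesis unfolding pwl_def .
qed

end
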